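(* Let $n$ be odd, let $k$ be a positive integer with $\gcd(k,n)=1$, let $L=GF(2^n)$, and let $t\in\{2,3\}$. For all $a\in L$ and $b,c\in L^*$, $$F^w(a,b,c)=\sum_{x\in L}(-1)^{\mathrm{Tr}\left(ax+bx^{2^k+1}+cx^{2^{tk}+1}\right)}\in\left\{0,\ \pm2^{\frac{n+1}{2}},\ \pm 2^{\frac{n+3}{2}}\right\}.$$
   Context: $\mathrm{Tr}$ denotes the absolute trace from $GF(2^n)$ to $GF(2)$, $\mathrm{Tr}(x)=\sum_{i=0}^{n-1}x^{2^i}$; $L^*=L\setminus\{0\}$. *)

theory Defs
  imports Main
begin

text \<open>Absolute trace from a field of order 2^n to its prime field GF(2),
  Tr(x) = sum over i < n of x^(2^i).  Its values are 0 or 1 in the field.\<close>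
definition abs_trace :: "nat \<Rightarrow> 'a::field \<Rightarrow> 'a" where
  "abs_trace n x = (\<Sum>i<n. x ^ (2 ^ i))"

definition chi :: "nat \<Rightarrow> 'a::field \<Rightarrow> int" where
  "chi n y = (if abs_trace n y = 0 then 1 else -1)"

definition Fw :: "nat \<Rightarrow> nat \<Rightarrow> nat \<Rightarrow> 'a::{field,finite} \<Rightarrow> 'a \<Rightarrow> 'a \<Rightarrow> int" where
  "Fw n k t a b c = (\<Sum>x\<in>(UNIV::'a set).
      chi n (a * x + b * x ^ (2 ^ k + 1) + c * x ^ (2 ^ (t * k) + 1)))"

end

theory Submission
  imports Defs "HOL-Number_Theory.Residues" "HOL-Computational_Algebra.Primes"
begin

locale gf =
  fixes n :: nat
  assumes card: "card (UNIV :: 'a::{field,finite} set) = 2 ^ n"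
    and oddn: "odd n"
begin

lemma char2: "CHAR('a) = 2"
proof -
  have pos: "CHAR('a) > 0" by (rule finite_imp_CHAR_pos) simp
  have pr: "prime CHAR('a)" using prime_CHAR_semidom[OF pos] .
  have "CHAR('a) dvd 2 ^ n" using CHAR_dvd_CARD[where 'a='a] card by simp
  hence "CHAR('a) dvd 2" using pr prime_dvd_power by blast
  thus ?thesis using pr using primes_dvd_imp_eq[OF pr two_is_prime_nat] by simp
qed

lemma two0: "(2::'a) = 0"
  using of_nat_CHAR[where 'a='a] char2 by simp

lemma add_self[simp]: "(x::'a) + x = 0"
  by (metis mult_2 two0 mult_zero_left)

lemma minus_eq[simp]: "- (x::'a) = x"
  by (metis add_self add.inverse_unique)

lemma diff_eq_add: "(x::'a) - y = x + y"
  by (metis diff_conv_add_uminus minus_eq)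

lemma add_eq0_iff: "(x::'a) + y = 0 \<longleftrightarrow> x = y"
  by (metis add_self add.commute add.left_cancel add_0_right diff_eq_add eq_iff_diff_eq_0)

lemma primeC: "prime CHAR('a)" using char2 by simp

lemma frob: "((x::'a) + y) ^ (2 ^ j) = x ^ (2 ^ j) + y ^ (2 ^ j)"
  using freshmans_dream'[where 'a='a and m="2^j" and n=j, OF primeC] char2 by simp

lemma frob_sum: "(sum (f::'b \<Rightarrow> 'a) A) ^ (2 ^ j) = (\<Sum>i\<in>A. f i ^ (2 ^ j))"
  using freshmans_dream_sum'[where 'a='a and m="2^j" and n=j, OF primeC] char2 by simp

lemma pow2_pow2: "((x::'a) ^ (2 ^ p)) ^ (2 ^ q) = x ^ (2 ^ (p + q))"
  by (simp add: power_mult[symmetric] power_add)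

lemma pow_card: "(x::'a) ^ (2 ^ n) = x"
proof (cases "x = 0")
  case False
  have "x * (\<Prod>y\<in>UNIV-{0}. x * y) = x * x ^ (card (UNIV :: 'a set) - 1) * \<Prod>(UNIV-{0})"
    by (simp add: prod.distrib mult_ac)
  also have "x * x ^ (card (UNIV :: 'a set) - 1) = x ^ Suc (card (UNIV :: 'a set) - 1)"
    by (subst power_Suc) auto
  also have "Suc (card (UNIV :: 'a set) - 1) = card (UNIV :: 'a set)"
    using finite_UNIV_card_ge_0[where ?'a = 'a] by simp
  also have "(\<Prod>y\<in>UNIV-{0}. x * y) = (\<Prod>y\<in>UNIV-{0}. y)"
    by (rule prod.reindex_bij_witness[of _ "\<lambda>y. y / x" "\<lambda>y. x * y"]) (use False in auto)
  finally show ?thesis using card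
    by simp
qed (use oddn in \<open>auto simp: power_0_left\<close>)

lemma pow_card_mult: "(x::'a) ^ (2 ^ (n * j)) = x"
proof (induction j)
  case (Suc j)
  have "x ^ (2 ^ (n * Suc j)) = (x ^ (2 ^ (n*j))) ^ (2 ^ n)"
    by (simp add: pow2_pow2 add.commute)
  then show ?case using Suc pow_card by simp
qed simp

lemma fixed_pts:
  assumes "m > 0" "gcd m n = 1" "(x::'a) ^ (2 ^ m) = x"
  shows "x = 0 \<or> x = 1"
proof -
  obtain u v where uv: "m * u = n * v + 1" using bezout_nat[of m n] assms by auto
  have it: "x ^ (2 ^ (m * j)) = x" for j
  proof (induction j)
    case (Suc j)
    have "x ^ (2 ^ (m * Suc j)) = (x ^ (2 ^ (m*j))) ^ (2 ^ m)"
      by (simp add: pow2_pow2 add.commute)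
    then show ?case using Suc assms(3) by simp
  qed simp
  have "x ^ (2 ^ (m*u)) = (x ^ (2 ^ (n*v))) ^ 2"
    by (simp add: uv pow2_pow2[of x "n*v" 1, simplified])
  hence "x = x ^ 2" using it pow_card_mult by simp
  hence "x * (x - 1) = 0" by (simp add: algebra_simps power2_eq_square)
  thus ?thesis by auto
qed

end

context gf begin

abbreviation T where "T \<equiv> (abs_trace n :: 'a \<Rightarrow> 'a)"

lemma T_add: "T (x + y) = T x + T y"
  unfolding abs_trace_def by (simp add: frob sum.distrib)

lemma T_sq: "T (x ^ 2) = T x"
proof -
  have "T (x^2) = (\<Sum>i<n. x ^ (2 ^ Suc i))"
    unfolding abs_trace_def by (simp add: power_mult[symmetric] mult.commute)
  also have "\<dots> = (\<Sum>i<n. x ^ (2 ^ i))"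
  proof -
    have "x + (\<Sum>i<n. x ^ (2 ^ Suc i)) = (\<Sum>i<Suc n. x ^ (2 ^ i))"
      by (subst sum.lessThan_Suc_shift) simp
    also have "\<dots> = (\<Sum>i<n. x ^ (2 ^ i)) + x"
      by (simp add: pow_card)
    finally show ?thesis by (simp add: add.commute)
  qed
  also have "\<dots> = T x" by (simp add: abs_trace_def)
  finally show ?thesis .
qed

lemma T_frob: "T (x ^ (2 ^ j)) = T x"
proof (induction j)
  case (Suc j)
  have "x ^ (2 ^ Suc j) = (x ^ (2^j)) ^ 2" by (simp add: power_mult[symmetric] mult.commute)
  then show ?case using Suc T_sq by simp
qed simp

lemma T_01: "T x = 0 \<or> T x = 1"
proof -
  have "T x ^ 2 = T (x ^ 2)"
    unfolding abs_trace_def using frob_sum[of "\<lambda>i. x ^ 2 ^ i" "{..<n}" 1]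
    by (simp add: power_mult[symmetric] mult.commute)
  hence "T x ^ 2 = T x" using T_sq by simp
  hence "T x * (T x - 1) = 0" by (simp add: algebra_simps power2_eq_square)
  thus ?thesis by auto
qed

lemma T_one: "T 1 = 1"
proof -
  obtain q where q: "n = 2*q+1" using oddn oddE by blast
  have "T 1 = of_nat n" unfolding abs_trace_def by simp
  also have "\<dots> = 2 * of_nat q + 1" using q by simp
  finally show ?thesis using two0 by simp
qed

abbreviation X where "X \<equiv> (chi n :: 'a \<Rightarrow> int)"

lemma X_vals: "X y = 1 \<or> X y = -1" unfolding chi_def by auto

lemma X_add: "X (x + y) = X x * X y"
  unfolding chi_def T_add using T_01[of x] T_01[of y] by auto

lemma X_zero[simp]: "X 0 = 1" unfolding chi_def abs_trace_def by (simp add: power_0_left)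

lemma X_1_iff: "X y = 1 \<longleftrightarrow> T y = 0" unfolding chi_def by auto

lemma char_sum:
  assumes fin: "finite S" and cl: "\<And>x y. x \<in> S \<Longrightarrow> y \<in> S \<Longrightarrow> x + y \<in> S"
    and hom: "\<And>x y. x \<in> S \<Longrightarrow> y \<in> S \<Longrightarrow> h (x + y) = h x * h y"
    and vals: "\<And>x. x \<in> S \<Longrightarrow> h x = 1 \<or> h x = (-1::int)"
  shows "sum h (S::'a set) = (if \<exists>x\<in>S. h x = -1 then 0 else int (card S))"
proof (cases "\<exists>x\<in>S. h x = -1")
  case True
  then obtain x0 where x0: "x0 \<in> S" "h x0 = -1" by blast
  have "sum h S = (\<Sum>x\<in>S. h (x + x0))"
    by (rule sum.reindex_bij_witness[of _ "\<lambda>x. x + x0" "\<lambda>x. x + x0"])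
       (auto simp: cl x0 add.assoc)
  also have "\<dots> = - sum h S" using hom x0 by (simp add: sum_negf)
  finally show ?thesis using True by simp
next
  case False
  hence "\<forall>x\<in>S. h x = 1" using vals by blast
  then show ?thesis using False by simp
qed

end

context gf begin

definition P :: "nat \<Rightarrow> (nat \<Rightarrow> 'a) \<Rightarrow> nat \<Rightarrow> 'a \<Rightarrow> 'a" where
  "P m a d z = (\<Sum>i\<le>d. a i * z ^ (2 ^ (m * i)))"

definition Mv :: "nat \<Rightarrow> 'a \<Rightarrow> 'a \<Rightarrow> 'a" where
  "Mv m v z = v * z ^ (2 ^ m) + v ^ (2 ^ m) * z"

lemma Mv_pow: "(Mv m v z) ^ (2 ^ (m * j)) =
   v ^ (2 ^ (m * j)) * z ^ (2 ^ (m * Suc j)) + v ^ (2 ^ (m * Suc j)) * z ^ (2 ^ (m * j))"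
  unfolding Mv_def by (simp add: frob power_mult_distrib pow2_pow2 add.commute)

lemma P_Suc: "P m a (Suc d) z = P m a d z + a (Suc d) * z ^ (2 ^ (m * Suc d))"
  unfolding P_def by simp

lemma P_upd: "P m (a(Suc d := w)) d z = P m a d z"
  unfolding P_def by (intro sum.cong) auto

lemma decomp:
  assumes v: "v \<noteq> 0"
  shows "\<exists>b r. b d = a (Suc d) / v ^ (2 ^ (m * d)) \<and> (\<forall>z. P m a (Suc d) z = P m b d (Mv m v z) + r * z)"
proof (induction d arbitrary: a)
  case 0
  let ?b0 = "a 1 / v"
  have "\<forall>z. P m a (Suc 0) z = P m (\<lambda>_. ?b0) 0 (Mv m v z) + (a 0 + ?b0 * v ^ (2^m)) * z"
    using v two0 by (auto simp: P_def Mv_def field_simps)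
  then show ?case by (intro exI[of _ "\<lambda>_. ?b0"] exI[of _ "a 0 + ?b0 * v ^ (2^m)"]) simp
next
  case (Suc d)
  define \<beta> where "\<beta> = a (Suc (Suc d)) / v ^ (2 ^ (m * Suc d))"
  define a' where "a' = a(Suc d := a (Suc d) + \<beta> * v ^ (2 ^ (m * Suc (Suc d))))"
  obtain b' r where b': "b' d = a' (Suc d) / v ^ (2 ^ (m * d))"
    and eq: "\<forall>z. P m a' (Suc d) z = P m b' d (Mv m v z) + r * z"
    using Suc.IH[of a'] by blast
  have vnz: "v ^ (2 ^ (m * Suc d)) \<noteq> 0" using v by simp
  have key: "P m a (Suc (Suc d)) z = P m (b'(Suc d := \<beta>)) (Suc d) (Mv m v z) + r * z" for z
  proof -
    have "P m a (Suc (Suc d)) z = P m a' (Suc d) z + \<beta> * (Mv m v z) ^ (2 ^ (m * Suc d))"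
      unfolding P_Suc Mv_pow a'_def P_upd using vnz
      by (simp add: \<beta>_def field_simps)
    also have "\<dots> = P m b' d (Mv m v z) + r * z + \<beta> * (Mv m v z) ^ (2 ^ (m * Suc d))"
      using eq by simp
    also have "\<dots> = P m (b'(Suc d := \<beta>)) (Suc d) (Mv m v z) + r * z"
      unfolding P_Suc P_upd by simp
    finally show ?thesis .
  qed
  have "(b'(Suc d := \<beta>)) (Suc d) = a (Suc (Suc d)) / v ^ (2 ^ (m * Suc d))" by (simp add: \<beta>_def)
  then show ?case using key by blast
qed

end

context gf begin

lemma Mv_add: "Mv m v (x + y) = Mv m v x + Mv m v y"
  unfolding Mv_def by (simp add: frob algebra_simps)

lemma Mv_ker:
  assumes m: "m > 0" "gcd m n = 1" and v: "v \<noteq> 0" and w: "Mv m v w = 0"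
  shows "w = 0 \<or> w = v"
proof (cases "w = 0")
  case False
  have e: "v * w ^ (2 ^ m) = v ^ (2 ^ m) * w" using w unfolding Mv_def add_eq0_iff .
  have "(w / v) ^ (2 ^ m) = w / v"
    using e v False by (simp add: power_divide field_simps)
  hence "w / v = 0 \<or> w / v = 1" using fixed_pts[OF m] by blast
  thus ?thesis using v False by auto
qed simp

lemma P_zero: "P m a d 0 = 0" unfolding P_def by (simp add: power_0_left)

lemma root_bound:
  assumes m: "m > 0" "gcd m n = 1"
  shows "a d \<noteq> 0 \<Longrightarrow> card {z. P m a d z = 0} \<le> 2 ^ d"
proof (induction d arbitrary: a)
  case 0
  have "{z. P m a 0 z = 0} \<subseteq> {0}" using 0 by (auto simp: P_def)
  then show ?case using card_mono[of "{0}"] by simp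
next
  case (Suc d)
  let ?V = "{z. P m a (Suc d) z = 0}"
  show ?case
  proof (cases "?V \<subseteq> {0}")
    case True
    hence "card ?V \<le> 1" using card_mono[of "{0}"] by simp
    moreover have "(1::nat) \<le> 2 ^ Suc d" by simp
    ultimately show ?thesis by linarith
  next
    case False
    then obtain v where v: "v \<in> ?V" "v \<noteq> 0" by blast
    obtain b r where b: "b d = a (Suc d) / v ^ (2 ^ (m * d))"
      and eq: "\<forall>z. P m a (Suc d) z = P m b d (Mv m v z) + r * z"
      using decomp[OF v(2)] by blast
    have bd: "b d \<noteq> 0" using b Suc.prems v(2) by simp
    have "Mv m v v = 0" unfolding Mv_def by (simp add: mult.commute)
    hence "r * v = 0" using eq v(1) by (simp add: P_zero)
    hence r: "r = 0" using v(2) by simp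
    have img: "Mv m v ` ?V \<subseteq> {y. P m b d y = 0}" using eq r by auto
    have c1: "card (Mv m v ` ?V) \<le> 2 ^ d"
      using card_mono[OF _ img] Suc.IH[of b, OF bd] by simp
    have "?V \<subseteq> (\<Union>y\<in>Mv m v ` ?V. {z\<in>?V. Mv m v z = y})" by auto
    hence "card ?V \<le> card (\<Union>y\<in>Mv m v ` ?V. {z\<in>?V. Mv m v z = y})" by (intro card_mono) auto
    also have "\<dots> \<le> (\<Sum>y\<in>Mv m v ` ?V. card {z\<in>?V. Mv m v z = y})" by (intro card_UN_le) auto
    also have "\<dots> \<le> (\<Sum>y\<in>Mv m v ` ?V. 2)"
    proof (intro sum_mono)
      fix y assume "y \<in> Mv m v ` ?V"
      then obtain z0 where z0: "z0 \<in> ?V" "Mv m v z0 = y" by blast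
      have "{z\<in>?V. Mv m v z = y} \<subseteq> {z0, z0 + v}"
      proof
        fix z assume z: "z \<in> {z\<in>?V. Mv m v z = y}"
        hence "Mv m v (z + z0) = 0" using z0 Mv_add[of m v z z0] by (simp add: add_eq0_iff)
        hence "z + z0 = 0 \<or> z + z0 = v" using Mv_ker[OF m v(2)] by blast
        thus "z \<in> {z0, z0 + v}"
        proof
          assume "z + z0 = 0" thus ?thesis by (simp add: add_eq0_iff)
        next
          assume "z + z0 = v"
          hence "z = z0 + v" by (metis add.assoc add.commute add_self add_0_right)
          thus ?thesis by simp
        qed
      qed
      hence "card {z\<in>?V. Mv m v z = y} \<le> card {z0, z0 + v}" by (intro card_mono) auto
      also have "\<dots> \<le> 2" by (simp add: card_insert_le_m1)
      finally show "card {z\<in>?V. Mv m v z = y} \<le> 2" .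
    qed
    also have "\<dots> = 2 * card (Mv m v ` ?V)" by simp
    also have "\<dots> \<le> 2 ^ Suc d" using c1 by simp
    finally show ?thesis .
  qed
qed

end

context gf begin

definition ff :: "nat \<Rightarrow> nat \<Rightarrow> 'a \<Rightarrow> 'a \<Rightarrow> 'a \<Rightarrow> 'a \<Rightarrow> 'a" where
  "ff k t a b c x = a * x + b * x ^ (2 ^ k + 1) + c * x ^ (2 ^ (t * k) + 1)"

definition Bf :: "nat \<Rightarrow> nat \<Rightarrow> 'a \<Rightarrow> 'a \<Rightarrow> 'a \<Rightarrow> 'a \<Rightarrow> 'a" where
  "Bf k t b c x z = b * (x ^ (2 ^ k) * z + x * z ^ (2 ^ k)) + c * (x ^ (2 ^ (t * k)) * z + x * z ^ (2 ^ (t * k)))"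

lemma expand: "((x::'a) + z) ^ (2 ^ j + 1) = x ^ (2 ^ j + 1) + z ^ (2 ^ j + 1) + (x ^ (2 ^ j) * z + x * z ^ (2 ^ j))"
proof -
  have "(x + z) ^ (2 ^ j + 1) = (x ^ (2 ^ j) + z ^ (2 ^ j)) * (x + z)"
    by (simp only: power_add power_one_right frob)
  also have "\<dots> = x ^ (2 ^ j) * x + z ^ (2 ^ j) * z + (x ^ (2 ^ j) * z + x * z ^ (2 ^ j))"
    by (simp add: ring_distribs add_ac mult_ac)
  finally show ?thesis by (simp only: power_add power_one_right)
qed

lemma ff_add: "ff k t a b c (x + z) = ff k t a b c x + ff k t a b c z + Bf k t b c x z"
  unfolding ff_def Bf_def expand by (simp add: algebra_simps)

lemma Bf_add1: "Bf k t b c (x + y) z = Bf k t b c x z + Bf k t b c y z"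
  unfolding Bf_def by (simp add: frob algebra_simps)

lemma Bf_add2: "Bf k t b c z (x + y) = Bf k t b c z x + Bf k t b c z y"
  unfolding Bf_def by (simp add: frob algebra_simps)

definition Rad :: "nat \<Rightarrow> nat \<Rightarrow> 'a \<Rightarrow> 'a \<Rightarrow> 'a set" where
  "Rad k t b c = {z. \<forall>x. T (Bf k t b c x z) = 0}"

lemma Fw_eq: "Fw n k t a b c = (\<Sum>x\<in>UNIV. X (ff k t a b c x))"
  unfolding Fw_def ff_def ..

lemma inner:
  "(\<Sum>x\<in>UNIV. X (Bf k t b c x z)) = (if z \<in> Rad k t b c then 2 ^ n else 0)"
proof -
  have "(\<Sum>x\<in>UNIV. X (Bf k t b c x z)) = (if \<exists>x\<in>UNIV. X (Bf k t b c x z) = -1 then 0 else int (card (UNIV::'a set)))"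
    using char_sum[of UNIV "\<lambda>x. X (Bf k t b c x z)"] by (auto simp: Bf_add1 X_add X_vals)
  moreover have "(\<exists>x\<in>UNIV. X (Bf k t b c x z) = -1) \<longleftrightarrow> z \<notin> Rad k t b c"
  proof -
    have "X y = -1 \<longleftrightarrow> T y \<noteq> 0" for y using X_vals[of y] X_1_iff[of y] by auto
    thus ?thesis by (auto simp: Rad_def)
  qed
  ultimately show ?thesis using card by simp
qed

lemma Fsq: "(Fw n k t a b c)^2 = 2 ^ n * (\<Sum>z\<in>Rad k t b c. X (ff k t a b c z))"
proof -
  let ?f = "ff k t a b c"
  have "(Fw n k t a b c)^2 = (\<Sum>x\<in>UNIV. \<Sum>y\<in>UNIV. X (?f x) * X (?f y))"
    by (simp add: Fw_eq power2_eq_square sum_product)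
  also have "\<dots> = (\<Sum>x\<in>UNIV. \<Sum>z\<in>UNIV. X (?f x) * X (?f (x + z)))"
  proof (rule sum.cong[OF refl])
    fix x
    show "(\<Sum>y\<in>UNIV. X (?f x) * X (?f y)) = (\<Sum>z\<in>UNIV. X (?f x) * X (?f (x + z)))"
      by (rule sum.reindex_bij_witness[of _ "\<lambda>y. x + y" "\<lambda>y. x + y"])
         (auto simp: add.assoc[symmetric])
  qed
  also have "\<dots> = (\<Sum>x\<in>UNIV. \<Sum>z\<in>UNIV. X (?f z) * X (Bf k t b c x z))"
  proof (intro sum.cong refl)
    fix x z
    have "X (?f x) * X (?f (x + z)) = X (?f x + ?f (x + z))" by (simp add: X_add)
    also have "?f x + ?f (x + z) = ?f z + Bf k t b c x z"
      unfolding ff_add by (simp add: add.assoc[symmetric])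
    finally show "X (?f x) * X (?f (x + z)) = X (?f z) * X (Bf k t b c x z)" by (simp add: X_add)
  qed
  also have "\<dots> = (\<Sum>z\<in>UNIV. X (?f z) * (\<Sum>x\<in>UNIV. X (Bf k t b c x z)))"
    by (subst sum.swap) (simp add: sum_distrib_left)
  also have "\<dots> = (\<Sum>z\<in>UNIV. if z \<in> Rad k t b c then 2 ^ n * X (?f z) else 0)"
    by (intro sum.cong refl) (simp add: inner)
  also have "\<dots> = 2 ^ n * (\<Sum>z\<in>Rad k t b c. X (?f z))"
    by (simp add: sum.If_cases sum_distrib_left)
  finally show ?thesis .
qed

lemma Rad_sum: "(\<Sum>z\<in>Rad k t b c. X (ff k t a b c z)) = 0 \<or>
   (\<Sum>z\<in>Rad k t b c. X (ff k t a b c z)) = int (card (Rad k t b c))"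
proof -
  have "(\<Sum>z\<in>Rad k t b c. X (ff k t a b c z)) = (if \<exists>z\<in>Rad k t b c. X (ff k t a b c z) = -1 then 0 else int (card (Rad k t b c)))"
  proof (rule char_sum)
    show "x + y \<in> Rad k t b c" if "x \<in> Rad k t b c" "y \<in> Rad k t b c" for x y
      using that by (auto simp: Rad_def Bf_add2 T_add)
    show "X (ff k t a b c (x + y)) = X (ff k t a b c x) * X (ff k t a b c y)"
      if "x \<in> Rad k t b c" "y \<in> Rad k t b c" for x y
      using that unfolding ff_add X_add by (auto simp: Rad_def X_1_iff[symmetric])
  qed (auto simp: X_vals)
  thus ?thesis by auto
qed

lemma zero_Rad: "0 \<in> Rad k t b c"
  unfolding Rad_def Bf_def abs_trace_def by (simp add: power_0_left)

end

context gf begin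

lemma Tf: "T u = T (u ^ (2 ^ j))" using T_frob[of u j] by simp

definition a2 :: "nat \<Rightarrow> 'a \<Rightarrow> 'a \<Rightarrow> nat \<Rightarrow> 'a" where
  "a2 k b c i = (if i = 0 then c else if i = 1 then b ^ (2 ^ k) else if i = 2 then 0
       else if i = 3 then b ^ (2 ^ (2*k)) else c ^ (2 ^ (2*k)))"

definition a3 :: "nat \<Rightarrow> 'a \<Rightarrow> 'a \<Rightarrow> nat \<Rightarrow> 'a" where
  "a3 k b c i = (if i = 0 then c else if i = 1 then b ^ (2 ^ (2*k)) else if i = 2 then b ^ (2 ^ (3*k))
       else c ^ (2 ^ (3*k)))"

lemma TB2: "T (Bf k 2 b c x z) = T (x ^ (2 ^ (2*k)) * P k (a2 k b c) 4 z)"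
proof -
  have e1: "T (b * (x^(2^k)*z)) = T (x ^ (2 ^ (2*k)) * (b^(2^k) * z^(2^k)))"
    using Tf[of "b * (x^(2^k)*z)" k] by (simp add: power_mult_distrib pow2_pow2 mult_2 mult_2_right mult_ac)
  have e2: "T (b * (x*z^(2^k))) = T (x ^ (2 ^ (2*k)) * (b^(2^(2*k)) * z^(2^(3*k))))"
    using Tf[of "b * (x*z^(2^k))" "2*k"] by (simp add: power_mult_distrib pow2_pow2 mult_ac)
  have e4: "T (c * (x*z^(2^(2*k)))) = T (x ^ (2 ^ (2*k)) * (c^(2^(2*k)) * z^(2^(4*k))))"
    using Tf[of "c * (x*z^(2^(2*k)))" "2*k"] by (simp add: power_mult_distrib pow2_pow2 mult_ac)
  have "P k (a2 k b c) 4 z = c * z + b^(2^k) * z^(2^k) + b^(2^(2*k)) * z^(2^(3*k)) + c^(2^(2*k)) * z^(2^(4*k))"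
    by (simp add: P_def a2_def eval_nat_numeral mult_ac)
  hence "T (x ^ (2 ^ (2*k)) * P k (a2 k b c) 4 z) =
     T (c * (x ^ (2 ^ (2*k)) * z)) + T (x ^ (2 ^ (2*k)) * (b^(2^k) * z^(2^k))) +
     T (x ^ (2 ^ (2*k)) * (b^(2^(2*k)) * z^(2^(3*k)))) + T (x ^ (2 ^ (2*k)) * (c^(2^(2*k)) * z^(2^(4*k))))"
    by (simp add: ring_distribs T_add mult_ac)
  moreover have "T (Bf k 2 b c x z) = T (b * (x^(2^k)*z)) + T (b * (x*z^(2^k))) + T (c * (x ^ (2 ^ (2*k)) * z)) + T (c * (x*z^(2^(2*k))))"
    unfolding Bf_def by (simp add: ring_distribs T_add add_ac)
  ultimately show ?thesis using e1 e2 e4 by (simp add: add_ac)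
qed

lemma TB3: "T (Bf k 3 b c x z) = T (x ^ (2 ^ (3*k)) * P (2*k) (a3 k b c) 3 z)"
proof -
  have e1: "T (b * (x^(2^k)*z)) = T (x ^ (2 ^ (3*k)) * (b^(2^(2*k)) * z^(2^(2*k))))"
    using Tf[of "b * (x^(2^k)*z)" "2*k"] by (simp add: power_mult_distrib pow2_pow2 mult_ac)
  have e2: "T (b * (x*z^(2^k))) = T (x ^ (2 ^ (3*k)) * (b^(2^(3*k)) * z^(2^(4*k))))"
    using Tf[of "b * (x*z^(2^k))" "3*k"] by (simp add: power_mult_distrib pow2_pow2 mult_ac)
  have e4: "T (c * (x*z^(2^(3*k)))) = T (x ^ (2 ^ (3*k)) * (c^(2^(3*k)) * z^(2^(6*k))))"
    using Tf[of "c * (x*z^(2^(3*k)))" "3*k"] by (simp add: power_mult_distrib pow2_pow2 mult_ac)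
  have "P (2*k) (a3 k b c) 3 z = c * z + b^(2^(2*k)) * z^(2^(2*k)) + b^(2^(3*k)) * z^(2^(4*k)) + c^(2^(3*k)) * z^(2^(6*k))"
    by (simp add: P_def a3_def eval_nat_numeral mult_ac add_ac)
  hence "T (x ^ (2 ^ (3*k)) * P (2*k) (a3 k b c) 3 z) =
     T (c * (x ^ (2 ^ (3*k)) * z)) + T (x ^ (2 ^ (3*k)) * (b^(2^(2*k)) * z^(2^(2*k)))) +
     T (x ^ (2 ^ (3*k)) * (b^(2^(3*k)) * z^(2^(4*k)))) + T (x ^ (2 ^ (3*k)) * (c^(2^(3*k)) * z^(2^(6*k))))"
    by (simp add: ring_distribs T_add mult_ac)
  moreover have "T (Bf k 3 b c x z) = T (b * (x^(2^k)*z)) + T (b * (x*z^(2^k))) + T (c * (x ^ (2 ^ (3*k)) * z)) + T (c * (x*z^(2^(3*k))))"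
    unfolding Bf_def by (simp add: ring_distribs T_add add_ac)
  ultimately show ?thesis using e1 e2 e4 by (simp add: add_ac)
qed

lemma frob_surj: "\<exists>x. (x::'a) ^ (2 ^ p) = y"
proof -
  have "inj (\<lambda>x::'a. x ^ (2 ^ p))"
  proof (rule injI)
    fix x y :: 'a assume "x ^ (2 ^ p) = y ^ (2 ^ p)"
    hence "(x + y) ^ (2 ^ p) = 0" by (simp add: frob)
    thus "x = y" by (simp add: add_eq0_iff)
  qed
  hence "surj (\<lambda>x::'a. x ^ (2 ^ p))" by (intro finite_UNIV_inj_surj) auto
  thus ?thesis unfolding surj_def by (metis)
qed

lemma nondeg:
  assumes "\<forall>x. T (x ^ (2 ^ p) * w) = 0" shows "w = 0"
proof (rule ccontr)
  assume "w \<noteq> 0"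
  obtain x where "x ^ (2 ^ p) = inverse w" using frob_surj by blast
  hence "T (x ^ (2 ^ p) * w) = T 1" using \<open>w \<noteq> 0\<close> by simp
  hence "T 1 = 0" using assms by simp
  thus False using T_one by simp
qed

lemma card_Rad:
  assumes k: "k > 0" "gcd k n = 1" and t: "t \<in> {2,3}" and c: "c \<noteq> 0"
  shows "card (Rad k t b c) \<le> 16"
proof (cases "t = 2")
  case True
  have "Rad k t b c \<subseteq> {z. P k (a2 k b c) 4 z = 0}"
  proof
    fix z assume "z \<in> Rad k t b c"
    hence "\<forall>x. T (x ^ (2 ^ (2*k)) * P k (a2 k b c) 4 z) = 0"
      using True unfolding Rad_def TB2[symmetric] by simp
    thus "z \<in> {z. P k (a2 k b c) 4 z = 0}" using nondeg by blast
  qed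
  moreover have "a2 k b c 4 \<noteq> 0" using c by (simp add: a2_def)
  hence "card {z. P k (a2 k b c) 4 z = 0} \<le> 2 ^ 4"
    using root_bound[OF k] by blast
  ultimately show ?thesis using card_mono[of "{z. P k (a2 k b c) 4 z = 0}" "Rad k t b c"] by simp
next
  case False
  hence t3: "t = 3" using t by auto
  have "coprime 2 n" using oddn by simp
  moreover have "coprime k n" using k(2) by (simp add: coprime_iff_gcd_eq_1)
  ultimately have "coprime (2*k) n" by simp
  hence g: "gcd (2*k) n = 1" by simp
  have "Rad k t b c \<subseteq> {z. P (2*k) (a3 k b c) 3 z = 0}"
  proof
    fix z assume "z \<in> Rad k t b c"
    hence "\<forall>x. T (x ^ (2 ^ (3*k)) * P (2*k) (a3 k b c) 3 z) = 0"
      using t3 unfolding Rad_def TB3[symmetric] by simp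
    thus "z \<in> {z. P (2*k) (a3 k b c) 3 z = 0}" using nondeg by blast
  qed
  moreover have "a3 k b c 3 \<noteq> 0" using c by (simp add: a3_def)
  hence "card {z. P (2*k) (a3 k b c) 3 z = 0} \<le> 2 ^ 3"
    using root_bound[of "2*k", OF _ g, of "a3 k b c" 3] k by simp
  ultimately show ?thesis using card_mono[of "{z. P (2*k) (a3 k b c) 3 z = 0}" "Rad k t b c"] by simp
qed

end

lemma final_nt:
  fixes F :: int and n r :: nat
  assumes "odd n" "1 \<le> r" "r \<le> 16" "F^2 = 2^n * int r"
  shows "F \<in> {2 ^ ((n + 1) div 2), - (2 ^ ((n + 1) div 2)), 2 ^ ((n + 3) div 2), - (2 ^ ((n + 3) div 2))}"
proof -
  obtain q where q: "n = 2*q+1" using assms(1) oddE by blast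
  have "(2^q)^2 dvd F^2" using assms(4) q by (simp add: power_add power_mult_distrib power_mult[symmetric] mult.commute)
  hence "(2::int)^q dvd F" by simp
  then obtain G where G: "F = 2^q * G" by blast
  have "(2^q)^2 * G^2 = (2^q)^2 * (2 * int r)"
    using assms(4) q G by (simp add: power_add power_mult_distrib power_mult[symmetric] mult_ac)
  hence G2: "G^2 = 2 * int r" by simp
  have "\<bar>G\<bar> \<le> 5"
  proof (rule ccontr)
    assume "\<not> \<bar>G\<bar> \<le> 5"
    hence "6 * 6 \<le> \<bar>G\<bar> * \<bar>G\<bar>" by (intro mult_mono) auto
    hence "36 \<le> G^2" by (simp add: power2_eq_square abs_mult[symmetric])
    thus False using G2 assms(3) by simp
  qed
  hence "G \<in> {-5..5}" by auto
  hence "G \<in> {-5,-4,-3,-2,-1,0,1,2,3,4,5}" by (simp add: atLeastAtMost_iff) presburger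
  hence "G = 2 \<or> G = -2 \<or> G = 4 \<or> G = -4"
    using G2 assms(2) by (auto simp: power2_eq_square; presburger)
  moreover have "(n + 1) div 2 = q + 1" "(n + 3) div 2 = q + 2" using q by auto
  ultimately show ?thesis using G by (auto simp: power_add)
qed


theorem mainTheorem2:
  fixes a b c :: "'a::{field,finite}" and n k t :: nat
  assumes "card (UNIV :: 'a set) = 2 ^ n"
    and "odd n"
    and "k > 0" and "gcd k n = 1"
    and "t \<in> {2, 3}"
    and "b \<noteq> 0" and "c \<noteq> 0"
  shows "Fw n k t a b c \<in> {0, 2 ^ ((n + 1) div 2), - (2 ^ ((n + 1) div 2)),
                           2 ^ ((n + 3) div 2), - (2 ^ ((n + 3) div 2))}"
proof -
  have gfa: "gf TYPE('a) n" unfolding gf_def using assms(1,2) by simp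
  interpret gf n by (rule gfa)
  have r1: "1 \<le> card (Rad k t b c)"
    using zero_Rad[of k t b c] by (metis One_nat_def Suc_leI card_gt_0_iff empty_iff finite)
  have r2: "card (Rad k t b c) \<le> 16" using card_Rad[OF assms(3,4,5,7)] .
  show ?thesis
  proof (cases "(\<Sum>z\<in>Rad k t b c. X (ff k t a b c z)) = 0")
    case True
    hence "(Fw n k t a b c)^2 = 0" using Fsq[of k t a b c] by simp
    thus ?thesis by simp
  next
    case False
    hence "(Fw n k t a b c)^2 = 2^n * int (card (Rad k t b c))"
      using Fsq[of k t a b c] Rad_sum[of k t a b c] by simp
    thus ?thesis using final_nt[OF assms(2) r1 r2] by simp
  qed
qed

end
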